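(* $\mathsf{COH}$ admits fairness preservation. That is, for all $A_0,A_1\subseteq2^{<\omega}$, every set $C$ fair for $A_0,A_1$, and every uniformly $C$-computable sequence $\vec R$, there is an $\vec R$-cohesive set $G$ with $G\oplus C$ fair for $A_0,A_1$.
   Context: An infinite set $G$ is $\vec R$-cohesive if for each $i$, $G\subseteq^* R_i$ or $G\subseteq^*\overline{R_i}$ (inclusion up to finitely many elements). Strings are finite binary strings, and $\preceq$ is the prefix relation. Two strings are incomparable if neither is a prefix of the other. Matrices. An $m$-by-$n$ matrix $M$ is an array of strings $\sigma_{i,j}$ ($i<m$, $j<n$), with rows $M(i)=(\sigma_{i,0},\dots,\sigma_{i,n-1})$. It is disjoint if each row consists of pairwise incomparable strings. Formulas. An $m$-by-$n$ formula is a formula with distinguished finite-set variables $U_{i,j}$. It is $\Sigma^{0,X}_1$ if it is $\Sigma^0_1$ relative to $X$. Valuations. An $M$-valuation is a tuple $V=(B_{i,j})$ of finite sets $B_{i,j}\subseteq\{\tau:\tau\succeq\sigma_{i,j}\}$. We write $\varphi(V)$ for $\varphi$ evaluated at $U_{i,j}:=B_{i,j}$, and $V(i)=(B_{i,0},\dots,B_{i,n-1})$. We write $V>s$ if all strings occurring in $V$ have length $>s$. Essential. $\varphi$ is essential in $M$ if for every $s$ there is an $M$-valuation $V>s$ with $\varphi(V)$. Diagonalization. An $M$-valuation $V$ diagonalizes against $A_0,A_1$ if for every $i<m$ there are components $L,R$ of $V(i)$ with $L\subseteq A_0$ and $R\subseteq A_1$. Fairness. For $n\ge1$, a set $X$ is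 $n$-fair for $A_0,A_1$ if the following holds: for every $m$, every $\Sigma^{0,X}_1$ $m$-by-$2^nm$ formula $\varphi$, and every $m$-by-$2^nm$ disjoint matrix $M$ in which $\varphi$ is essential, there is an $M$-valuation $V$ diagonalizing against $A_0,A_1$ with $\varphi(V)$. The set $X$ is fair if it is $n$-fair for some $n\ge1$. *)

theory Defs
  imports Main "HOL-Library.Sublist" "HOL-Library.Nat_Bijection"
begin

text \<open>orec X n f: f is an n-ary total X-recursive function (arguments given as a list
  of length n).\<close>

inductive orec :: "nat set \<Rightarrow> nat \<Rightarrow> (nat list \<Rightarrow> nat) \<Rightarrow> bool" for X :: "nat set" where
  zero: "orec X n (\<lambda>_. 0)"
| succ: "orec X 1 (\<lambda>xs. Suc (hd xs))"
| proj: "i < n \<Longrightarrow> orec X n (\<lambda>xs. xs ! i)"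
| char_X: "orec X 1 (\<lambda>xs. if hd xs \<in> X then 1 else 0)"
| comp: "orec X m g \<Longrightarrow> length gs = m \<Longrightarrow> (\<forall>h\<in>set gs. orec X n h)
          \<Longrightarrow> orec X n (\<lambda>xs. g (map (\<lambda>h. h xs) gs))"
| prim_rec: "orec X n g \<Longrightarrow> orec X (n + 2) h
          \<Longrightarrow> orec X (n + 1) (\<lambda>xs. rec_nat (g (tl xs)) (\<lambda>k r. h (k # r # tl xs)) (hd xs))"
| mu: "orec X (n + 1) g \<Longrightarrow> (\<forall>xs. length xs = n \<longrightarrow> (\<exists>y. g (y # xs) = 0))
          \<Longrightarrow> orec X n (\<lambda>xs. LEAST y. g (y # xs) = 0)"

definition sigma1_rel :: "nat set \<Rightarrow> nat set \<Rightarrow> bool" where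
  "sigma1_rel X S \<longleftrightarrow> (\<exists>f. orec X 2 f \<and> (\<forall>x. x \<in> S \<longleftrightarrow> (\<exists>y. f [x, y] = 0)))"

definition unif_computable :: "nat set \<Rightarrow> (nat \<Rightarrow> nat set) \<Rightarrow> bool" where
  "unif_computable X R \<longleftrightarrow>
     (\<exists>f. orec X 2 f \<and> (\<forall>i x. f [i, x] = (if x \<in> R i then 1 else 0)))"

definition join :: "nat set \<Rightarrow> nat set \<Rightarrow> nat set" where
  "join G C = {2 * x | x. x \<in> G} \<union> {2 * x + 1 | x. x \<in> C}"

definition cohesive :: "(nat \<Rightarrow> nat set) \<Rightarrow> nat set \<Rightarrow> bool" where
  "cohesive R G \<longleftrightarrow> infinite G \<and> (\<forall>i. finite (G - R i) \<or> finite (G - (- R i)))"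

type_synonym str = "bool list"

text \<open>Explicit (computable) bijective coding of binary strings by naturals.\<close>
fun str_code :: "str \<Rightarrow> nat" where
  "str_code [] = 0"
| "str_code (b # s) = 2 * str_code s + (if b then 2 else 1)"

definition incomparable :: "str \<Rightarrow> str \<Rightarrow> bool" where
  "incomparable a b \<longleftrightarrow> \<not> prefix a b \<and> \<not> prefix b a"

text \<open>An m-by-n matrix is M :: nat \<Rightarrow> nat \<Rightarrow> str (entries i<m, j<n are relevant).\<close>
definition disjoint_matrix :: "nat \<Rightarrow> nat \<Rightarrow> (nat \<Rightarrow> nat \<Rightarrow> str) \<Rightarrow> bool" where
  "disjoint_matrix m n M \<longleftrightarrow>
     (\<forall>i<m. \<forall>j<n. \<forall>k<n. j \<noteq> k \<longrightarrow> incomparable (M i j) (M i k))"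

text \<open>A valuation V assigns to the variable U_{i,j} the set V i j.\<close>
definition valuation :: "nat \<Rightarrow> nat \<Rightarrow> (nat \<Rightarrow> nat \<Rightarrow> str) \<Rightarrow> (nat \<Rightarrow> nat \<Rightarrow> str set) \<Rightarrow> bool" where
  "valuation m n M V \<longleftrightarrow> (\<forall>i<m. \<forall>j<n. finite (V i j) \<and> V i j \<subseteq> {\<tau>. prefix (M i j) \<tau>})"

definition val_gt :: "nat \<Rightarrow> nat \<Rightarrow> (nat \<Rightarrow> nat \<Rightarrow> str set) \<Rightarrow> nat \<Rightarrow> bool" where
  "val_gt m n V s \<longleftrightarrow> (\<forall>i<m. \<forall>j<n. \<forall>\<tau>\<in>V i j. length \<tau> > s)"

definition val_code :: "nat \<Rightarrow> nat \<Rightarrow> (nat \<Rightarrow> nat \<Rightarrow> str set) \<Rightarrow> nat" where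
  "val_code m n V =
     list_encode (concat (map (\<lambda>i. map (\<lambda>j. set_encode (str_code ` V i j)) [0..<n]) [0..<m]))"

text \<open>An m-by-n Sigma^{0,X}_1 formula phi is represented by the Sigma^0_1(X) set S of codes
  of the tuples of finite sets satisfying it: phi(V) iff val_code m n V \<in> S.\<close>
definition holds :: "nat \<Rightarrow> nat \<Rightarrow> nat set \<Rightarrow> (nat \<Rightarrow> nat \<Rightarrow> str set) \<Rightarrow> bool" where
  "holds m n S V \<longleftrightarrow> val_code m n V \<in> S"

definition essential :: "nat \<Rightarrow> nat \<Rightarrow> nat set \<Rightarrow> (nat \<Rightarrow> nat \<Rightarrow> str) \<Rightarrow> bool" where
  "essential m n S M \<longleftrightarrow> (\<forall>s. \<exists>V. valuation m n M V \<and> val_gt m n V s \<and> holds m n S V)"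

definition diagonalizes :: "nat \<Rightarrow> nat \<Rightarrow> (nat \<Rightarrow> nat \<Rightarrow> str set) \<Rightarrow> str set \<Rightarrow> str set \<Rightarrow> bool" where
  "diagonalizes m n V A0 A1 \<longleftrightarrow> (\<forall>i<m. \<exists>L<n. \<exists>R<n. V i L \<subseteq> A0 \<and> V i R \<subseteq> A1)"

definition n_fair :: "nat \<Rightarrow> nat set \<Rightarrow> str set \<Rightarrow> str set \<Rightarrow> bool" where
  "n_fair k X A0 A1 \<longleftrightarrow>
     (\<forall>m S M. sigma1_rel X S \<longrightarrow> disjoint_matrix m (2 ^ k * m) M \<longrightarrow> essential m (2 ^ k * m) S M
        \<longrightarrow> (\<exists>V. valuation m (2 ^ k * m) M V \<and> diagonalizes m (2 ^ k * m) V A0 A1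
                 \<and> holds m (2 ^ k * m) S V))"

definition fair :: "nat set \<Rightarrow> str set \<Rightarrow> str set \<Rightarrow> bool" where
  "fair X A0 A1 \<longleftrightarrow> (\<exists>k\<ge>1. n_fair k X A0 A1)"

end

theory Submission
  imports Defs "HOL-Library.Countable"
begin


definition rc :: "nat set \<Rightarrow> nat \<Rightarrow> (nat list \<Rightarrow> nat) \<Rightarrow> bool" where
  "rc X n f \<longleftrightarrow> (\<exists>g. orec X n g \<and> (\<forall>xs. length xs = n \<longrightarrow> f xs = g xs))"

lemma orec_rc: "orec X n f \<Longrightarrow> rc X n f"
  unfolding rc_def by blast

lemma rc_cong: "rc X n f \<Longrightarrow> (\<And>xs. length xs = n \<Longrightarrow> f xs = f' xs) \<Longrightarrow> rc X n f'"
  unfolding rc_def by metis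

lemma rc_cong': "rc X n f \<Longrightarrow> (\<And>xs. length xs = n' \<Longrightarrow> f xs = f' xs) \<Longrightarrow> n = n' \<Longrightarrow> rc X n' f'"
  unfolding rc_def by metis

lemma rc_proj: "i < n \<Longrightarrow> rc X n (\<lambda>xs. xs ! i)"
  by (rule orec_rc) (rule orec.proj)

lemma rc_comp:
  assumes g: "rc X m g" and len: "length gs = m" and hs: "\<forall>h\<in>set gs. rc X n h"
  shows "rc X n (\<lambda>xs. g (map (\<lambda>h. h xs) gs))"
proof -
  obtain g0 where g0: "orec X m g0" "\<And>xs. length xs = m \<Longrightarrow> g xs = g0 xs"
    using g unfolding rc_def by blast
  define ch where "ch h = (SOME h'. orec X n h' \<and> (\<forall>xs. length xs = n \<longrightarrow> h xs = h' xs))" for h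
  have ch: "orec X n (ch h) \<and> (\<forall>xs. length xs = n \<longrightarrow> h xs = ch h xs)" if "h \<in> set gs" for h
  proof -
    have "\<exists>h'. orec X n h' \<and> (\<forall>xs. length xs = n \<longrightarrow> h xs = h' xs)"
      using hs that unfolding rc_def by blast
    thus ?thesis unfolding ch_def by (rule someI_ex)
  qed
  have "orec X n (\<lambda>xs. g0 (map (\<lambda>h. h xs) (map ch gs)))"
    by (rule orec.comp[OF g0(1)]) (use len ch in auto)
  moreover have "g (map (\<lambda>h. h xs) gs) = g0 (map (\<lambda>h. h xs) (map ch gs))" if "length xs = n" for xs
  proof -
    have e: "map (\<lambda>h. h xs) gs = map (\<lambda>h. h xs) (map ch gs)"
      unfolding map_map comp_def using ch that by (intro map_cong) auto
    show ?thesis unfolding e using g0(2) len by simp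
  qed
  ultimately show ?thesis unfolding rc_def by blast
qed

lemma rc_prim:
  assumes g: "rc X n g" and h: "rc X (n + 2) h"
  shows "rc X (n + 1) (\<lambda>xs. rec_nat (g (tl xs)) (\<lambda>k r. h (k # r # tl xs)) (hd xs))"
proof -
  obtain g0 where g0: "orec X n g0" "\<And>xs. length xs = n \<Longrightarrow> g xs = g0 xs"
    using g unfolding rc_def by blast
  obtain h0 where h0: "orec X (n+2) h0" "\<And>xs. length xs = n+2 \<Longrightarrow> h xs = h0 xs"
    using h unfolding rc_def by blast
  have "rec_nat (g (tl xs)) (\<lambda>k r. h (k # r # tl xs)) k = rec_nat (g0 (tl xs)) (\<lambda>k r. h0 (k # r # tl xs)) k"
    if "length xs = n + 1" for xs k
    using that by (induct k) (auto simp: g0(2) h0(2))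
  thus ?thesis unfolding rc_def using orec.prim_rec[OF g0(1) h0(1)] by blast
qed

lemma rc_zero: "rc X n (\<lambda>_. 0)"
  by (rule orec_rc) (rule orec.zero)

lemma rc_succ1: "rc X 1 (\<lambda>xs. Suc (xs ! 0))"
  by (rule rc_cong[OF orec_rc[OF orec.succ]]) (auto simp: length_Suc_conv)

lemma rc_comp1: "rc X 1 g \<Longrightarrow> rc X n a \<Longrightarrow> rc X n (\<lambda>xs. g [a xs])"
  using rc_comp[of X 1 g "[a]" n] by simp

lemma rc_comp2: "rc X 2 g \<Longrightarrow> rc X n a \<Longrightarrow> rc X n b \<Longrightarrow> rc X n (\<lambda>xs. g [a xs, b xs])"
  using rc_comp[of X 2 g "[a,b]" n] by (simp add: numeral_2_eq_2)

lemma rc_comp3: "rc X 3 g \<Longrightarrow> rc X n a \<Longrightarrow> rc X n b \<Longrightarrow> rc X n c \<Longrightarrow> rc X n (\<lambda>xs. g [a xs, b xs, c xs])"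
  using rc_comp[of X 3 g "[a,b,c]" n] by (simp add: numeral_3_eq_3)

lemma rc_comp4: "rc X 4 g \<Longrightarrow> rc X n a \<Longrightarrow> rc X n b \<Longrightarrow> rc X n c \<Longrightarrow> rc X n d \<Longrightarrow>
   rc X n (\<lambda>xs. g [a xs, b xs, c xs, d xs])"
  using rc_comp[of X 4 g "[a,b,c,d]" n] by (simp add: eval_nat_numeral)

lemma rc_lift1: "rc X 1 (\<lambda>xs. F (xs!0)) \<Longrightarrow> rc X n a \<Longrightarrow> rc X n (\<lambda>xs. F (a xs))"
  by (drule rc_comp1) auto

lemma rc_lift2: "rc X 2 (\<lambda>xs. F (xs!0) (xs!1)) \<Longrightarrow> rc X n a \<Longrightarrow> rc X n b \<Longrightarrow> rc X n (\<lambda>xs. F (a xs) (b xs))"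
  by (drule rc_comp2) auto

lemma rc_Suc: "rc X n a \<Longrightarrow> rc X n (\<lambda>xs. Suc (a xs))"
  by (rule rc_lift1[OF rc_succ1])

lemma rc_const: "rc X n (\<lambda>_. c)"
  by (induct c) (auto intro: rc_zero rc_Suc)

lemma rc_add2: "rc X 2 (\<lambda>xs. xs!0 + xs!1)"
proof -
  have h: "rc X 2 (\<lambda>xs. rec_nat (tl xs ! 0) (\<lambda>k r. Suc ((k # r # tl xs) ! 1)) (hd xs))"
    using rc_prim[OF rc_proj[of 0 1] rc_Suc[OF rc_proj[of 1 "1+2"]], of X] by (simp add: numeral_2_eq_2)
  show ?thesis
  proof (rule rc_cong[OF h])
    fix xs :: "nat list" assume "length xs = 2"
    then obtain a b where "xs = [a,b]" by (auto simp: numeral_2_eq_2 length_Suc_conv)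
    thus "rec_nat (tl xs ! 0) (\<lambda>k r. Suc ((k # r # tl xs) ! 1)) (hd xs) = xs ! 0 + xs ! 1"
      by (induct a arbitrary: xs) auto
  qed
qed

lemma rc_add: "rc X n a \<Longrightarrow> rc X n b \<Longrightarrow> rc X n (\<lambda>xs. a xs + b xs)"
  by (rule rc_lift2[OF rc_add2])

lemma rc_pred1: "rc X 1 (\<lambda>xs. xs!0 - 1)"
proof -
  have h: "rc X (0+1) (\<lambda>xs. rec_nat 0 (\<lambda>k r. (k # r # tl xs) ! 0) (hd xs))"
    by (rule rc_prim[OF rc_const rc_proj]) simp
  show ?thesis
  proof (rule rc_cong'[OF h])
    fix xs :: "nat list" assume "length xs = 1"
    thus "rec_nat 0 (\<lambda>k r. (k # r # tl xs) ! 0) (hd xs) = xs ! 0 - 1"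
      by (cases "hd xs") (auto simp: length_Suc_conv)
  qed simp
qed

lemma rc_pred: "rc X n a \<Longrightarrow> rc X n (\<lambda>xs. a xs - 1)"
  by (rule rc_lift1[OF rc_pred1])

lemma rc_sub2: "rc X 2 (\<lambda>xs. xs!1 - xs!0)"
proof -
  have h: "rc X (1+1) (\<lambda>xs. rec_nat (tl xs ! 0) (\<lambda>k r. (k # r # tl xs) ! 1 - 1) (hd xs))"
    by (rule rc_prim[OF rc_proj rc_pred[OF rc_proj]]) simp_all
  show ?thesis
  proof (rule rc_cong[OF h[simplified one_add_one]])
    fix xs :: "nat list" assume "length xs = 2"
    then obtain a b where xs: "xs = [a,b]" by (auto simp: numeral_2_eq_2 length_Suc_conv)
    have "rec_nat b (\<lambda>k r. r - 1) a = b - a" by (induct a) auto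
    thus "rec_nat (tl xs ! 0) (\<lambda>k r. (k # r # tl xs) ! 1 - 1) (hd xs) = xs ! 1 - xs ! 0"
      by (simp add: xs)
  qed
qed

lemma rc_sub: "rc X n a \<Longrightarrow> rc X n b \<Longrightarrow> rc X n (\<lambda>xs. a xs - b xs)"
  by (rule rc_lift2[where F="\<lambda>x y. y - x", OF rc_sub2])

lemma rc_mult2: "rc X 2 (\<lambda>xs. xs!0 * xs!1)"
proof -
  have h: "rc X (1+1) (\<lambda>xs. rec_nat 0 (\<lambda>k r. (k # r # tl xs) ! 1 + (k # r # tl xs) ! 2) (hd xs))"
    by (rule rc_prim[OF rc_const rc_add[OF rc_proj rc_proj]]) simp_all
  show ?thesis
  proof (rule rc_cong[OF h[simplified one_add_one]])
    fix xs :: "nat list" assume "length xs = 2"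
    then obtain a b where xs: "xs = [a,b]" by (auto simp: numeral_2_eq_2 length_Suc_conv)
    have "rec_nat 0 (\<lambda>k r. r + b) a = a * b" by (induct a) auto
    thus "rec_nat 0 (\<lambda>k r. (k # r # tl xs) ! 1 + (k # r # tl xs) ! 2) (hd xs) = xs ! 0 * xs ! 1"
      by (simp add: xs numeral_2_eq_2)
  qed
qed

lemma rc_mult: "rc X n a \<Longrightarrow> rc X n b \<Longrightarrow> rc X n (\<lambda>xs. a xs * b xs)"
  by (rule rc_lift2[OF rc_mult2])

lemma rc_if: "rc X n c \<Longrightarrow> rc X n a \<Longrightarrow> rc X n b \<Longrightarrow> rc X n (\<lambda>xs. if c xs = 0 then a xs else b xs)"
proof -
  assume c: "rc X n c" and a: "rc X n a" and b: "rc X n b"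
  have "rc X n (\<lambda>xs. (1 - c xs) * a xs + (1 - (1 - c xs)) * b xs)"
    by (intro rc_add rc_mult rc_sub rc_const a b c)
  thus ?thesis by (rule rc_cong) auto
qed

definition rp :: "nat set \<Rightarrow> nat \<Rightarrow> (nat list \<Rightarrow> bool) \<Rightarrow> bool" where
  "rp X n P \<longleftrightarrow> rc X n (\<lambda>xs. if P xs then 1 else 0)"

lemma rp_cong: "rp X n P \<Longrightarrow> (\<And>xs. length xs = n \<Longrightarrow> P xs = P' xs) \<Longrightarrow> rp X n P'"
  unfolding rp_def by (erule rc_cong) auto

lemma rc_ifp: "rp X n P \<Longrightarrow> rc X n a \<Longrightarrow> rc X n b \<Longrightarrow> rc X n (\<lambda>xs. if P xs then a xs else b xs)"
  unfolding rp_def by (drule rc_if[of X n _ b a]) (auto elim: rc_cong)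

lemma rp_eq: "rc X n a \<Longrightarrow> rc X n b \<Longrightarrow> rp X n (\<lambda>xs. a xs = b xs)"
proof -
  assume a: "rc X n a" and b: "rc X n b"
  have "rc X n (\<lambda>xs. if (a xs - b xs) + (b xs - a xs) = 0 then 1 else 0)"
    by (intro rc_if rc_add rc_sub rc_const a b)
  thus ?thesis unfolding rp_def by (rule rc_cong) auto
qed

lemma rp_less: "rc X n a \<Longrightarrow> rc X n b \<Longrightarrow> rp X n (\<lambda>xs. a xs < b xs)"
proof -
  assume a: "rc X n a" and b: "rc X n b"
  have "rc X n (\<lambda>xs. if b xs - a xs = 0 then 0 else 1)"
    by (intro rc_if rc_add rc_sub rc_const a b)
  thus ?thesis unfolding rp_def by (rule rc_cong) auto
qed

lemma rp_not: assumes "rp X n P" shows "rp X n (\<lambda>xs. \<not> P xs)"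
proof -
  have a: "rc X n (\<lambda>xs. if P xs then 1 else 0)" using assms unfolding rp_def .
  from rc_if[OF a rc_const[of X n 1] rc_const[of X n 0]] show ?thesis unfolding rp_def by (rule rc_cong) auto
qed

lemma rp_and: assumes "rp X n P" "rp X n Q" shows "rp X n (\<lambda>xs. P xs \<and> Q xs)"
proof -
  have a: "rc X n (\<lambda>xs. if P xs then 1 else 0)" and b: "rc X n (\<lambda>xs. if Q xs then 1 else 0)"
    using assms unfolding rp_def by auto
  from rc_if[OF a rc_const[of X n 0] b] show ?thesis unfolding rp_def by (rule rc_cong) auto
qed

lemma rp_or: assumes "rp X n P" "rp X n Q" shows "rp X n (\<lambda>xs. P xs \<or> Q xs)"
proof -
  have a: "rc X n (\<lambda>xs. if P xs then 1 else 0)" and b: "rc X n (\<lambda>xs. if Q xs then 1 else 0)"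
    using assms unfolding rp_def by auto
  from rc_if[OF a b rc_const[of X n 1]] show ?thesis unfolding rp_def by (rule rc_cong) auto
qed

lemma rp_imp: "rp X n P \<Longrightarrow> rp X n Q \<Longrightarrow> rp X n (\<lambda>xs. P xs \<longrightarrow> Q xs)"
  by (drule rp_not) (drule rp_or, assumption, simp)

lemma rp_memX: "rc X n h \<Longrightarrow> rp X n (\<lambda>xs. h xs \<in> X)"
proof -
  assume h: "rc X n h"
  have "rc X 1 (\<lambda>xs. if hd xs \<in> X then 1 else 0)" by (rule orec_rc) (rule orec.char_X)
  from rc_comp1[OF this h] show ?thesis unfolding rp_def by simp
qed

lemma map_drop_nth: "length zs = n + k \<Longrightarrow> map (\<lambda>i. zs ! (i + k)) [0..<n] = drop k zs"
  by (rule nth_equalityI) (auto simp: add.commute)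

lemma rc_shift:
  assumes "rc X m g" "\<And>i. i < m \<Longrightarrow> idx i < n"
  shows "rc X n (\<lambda>xs. g (map (\<lambda>i. xs ! idx i) [0..<m]))"
proof -
  have "rc X n (\<lambda>xs. g (map (\<lambda>h. h xs) (map (\<lambda>i xs. xs ! idx i) [0..<m])))"
    by (rule rc_comp[OF assms(1)]) (auto intro!: rc_proj assms(2))
  thus ?thesis by (simp add: comp_def)
qed

lemma mapnth: "length xs = n \<Longrightarrow> map ((!) xs) [0..<n] = xs"
  using map_nth[of xs] by simp

lemma rp_bex:
  assumes P: "rp X (Suc n) P" and t: "rc X n t"
  shows "rp X n (\<lambda>xs. \<exists>y<t xs. P (y # xs))"
proof -
  have P2: "rp X (n+2) (\<lambda>zs. P (zs!0 # drop 2 zs))"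
  proof -
    have r: "rc X (n+2) (\<lambda>zs. (\<lambda>xs. if P xs then 1 else 0) (map (\<lambda>i. zs ! (if i = 0 then 0 else i + 1)) [0..<Suc n]))"
      by (rule rc_shift[OF P[unfolded rp_def]]) auto
    have e: "map (\<lambda>i. zs ! (if i = 0 then 0 else i + 1)) [0..<Suc n] = zs!0 # drop 2 zs"
      if "length zs = n+2" for zs
      using that by (intro nth_equalityI) (auto simp: nth_Cons' add.commute simp del: upt_Suc)
    show ?thesis unfolding rp_def
      by (rule rc_cong[OF r]) (simp only: e)
  qed
  have h: "rc X (n+2) (\<lambda>zs. if P (zs!0 # drop 2 zs) \<or> zs!1 \<noteq> 0 then 1 else 0)"
    using rp_or[OF P2 rp_not[OF rp_eq[OF rc_proj[of 1 "n+2" X] rc_const[of X "n+2" 0]]]] unfolding rp_def by simp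
  have B: "rc X (n+1) (\<lambda>xs. rec_nat 0 (\<lambda>k r. if P ((k # r # tl xs)!0 # drop 2 (k # r # tl xs)) \<or> (k # r # tl xs)!1 \<noteq> 0 then 1 else 0) (hd xs))"
    by (rule rc_prim[OF rc_const h])
  have Bv: "rec_nat 0 (\<lambda>k r. if P ((k # r # tl xs)!0 # drop 2 (k # r # tl xs)) \<or> (k # r # tl xs)!1 \<noteq> 0 then 1 else 0) (hd xs)
     = (if \<exists>y<hd xs. P (y # tl xs) then 1 else 0)" for xs :: "nat list"
  proof -
    have "rec_nat 0 (\<lambda>k r. if P (k # tl xs) \<or> 0 < r then 1 else 0) m = (if \<exists>y<m. P (y # tl xs) then 1 else (0::nat))" for m
      by (induct m) (auto simp: less_Suc_eq)
    thus ?thesis by simp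
  qed
  have "rc X n (\<lambda>xs. (\<lambda>xs. if \<exists>y<hd xs. P (y # tl xs) then 1 else 0) (map (\<lambda>h. h xs) (t # map (\<lambda>i xs. xs ! i) [0..<n])))"
    by (rule rc_comp[OF rc_cong[OF B Bv]]) (auto intro: rc_proj t)
  thus ?thesis unfolding rp_def
    by (rule rc_cong) (simp add: comp_def mapnth)
qed

lemma rp_ball:
  assumes P: "rp X (Suc n) P" and t: "rc X n t"
  shows "rp X n (\<lambda>xs. \<forall>y<t xs. P (y # xs))"
  using rp_not[OF rp_bex[OF rp_not[OF P] t]] by simp

lemma rc_mod2: "rc X 1 (\<lambda>xs. xs!0 mod 2)"
proof -
  have h: "rc X (0+1) (\<lambda>xs. rec_nat 0 (\<lambda>k r. 1 - (k # r # tl xs) ! 1) (hd xs))"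
    by (rule rc_prim[OF rc_const rc_sub[OF rc_const rc_proj]]) simp
  show ?thesis
  proof (rule rc_cong'[OF h])
    fix xs :: "nat list" assume "length xs = 1"
    then obtain a where xs: "xs = [a]" by (auto simp: length_Suc_conv)
    have "rec_nat 0 (\<lambda>k r. 1 - r) a = a mod 2" by (induct a) (auto simp: mod_Suc)
    thus "rec_nat 0 (\<lambda>k r. 1 - (k # r # tl xs) ! 1) (hd xs) = xs ! 0 mod 2" by (simp add: xs)
  qed simp
qed

lemma rc_div2: "rc X 1 (\<lambda>xs. xs!0 div 2)"
proof -
  have h: "rc X (0+1) (\<lambda>xs. rec_nat 0 (\<lambda>k r. (k # r # tl xs) ! 1 + (k # r # tl xs) ! 0 mod 2) (hd xs))"
    by (rule rc_prim[OF rc_const rc_add[OF rc_proj rc_lift1[OF rc_mod2 rc_proj]]]) simp_all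
  show ?thesis
  proof (rule rc_cong'[OF h])
    fix xs :: "nat list" assume "length xs = 1"
    then obtain a where xs: "xs = [a]" by (auto simp: length_Suc_conv)
    have sd: "Suc b div 2 = b div 2 + b mod 2" for b :: nat by presburger
    have "rec_nat 0 (\<lambda>k r. r + k mod 2) a = a div 2" by (induct a) (auto simp: sd)
    thus "rec_nat 0 (\<lambda>k r. (k # r # tl xs) ! 1 + (k # r # tl xs) ! 0 mod 2) (hd xs) = xs ! 0 div 2" by (simp add: xs)
  qed simp
qed

lemma rc_divpow2: "rc X 2 (\<lambda>xs. xs!1 div 2 ^ (xs!0))"
proof -
  have h: "rc X (1+1) (\<lambda>xs. rec_nat (tl xs ! 0) (\<lambda>k r. (k # r # tl xs) ! 1 div 2) (hd xs))"
    by (rule rc_prim[OF rc_proj rc_lift1[OF rc_div2 rc_proj]]) simp_all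
  show ?thesis
  proof (rule rc_cong[OF h[simplified one_add_one]])
    fix xs :: "nat list" assume "length xs = 2"
    then obtain a b where xs: "xs = [a,b]" by (auto simp: numeral_2_eq_2 length_Suc_conv)
    have "rec_nat b (\<lambda>k r. r div 2) a = b div 2 ^ a" by (induct a) (auto, metis div_mult2_eq mult.commute)
    thus "rec_nat (tl xs ! 0) (\<lambda>k r. (k # r # tl xs) ! 1 div 2) (hd xs) = xs ! 1 div 2 ^ (xs ! 0)"
      by (simp add: xs)
  qed
qed

lemma rc_divpow: "rc X n a \<Longrightarrow> rc X n b \<Longrightarrow> rc X n (\<lambda>xs. b xs div 2 ^ a xs)"
  by (rule rc_lift2[where F="\<lambda>x y. y div 2 ^ x", OF rc_divpow2])

lemma rp_bit: "rc X n a \<Longrightarrow> rc X n b \<Longrightarrow> rp X n (\<lambda>xs. a xs \<in> set_decode (b xs))"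
proof -
  assume a: "rc X n a" and b: "rc X n b"
  have "rp X n (\<lambda>xs. (b xs div 2 ^ a xs) mod 2 = 1)"
    by (intro rp_eq rc_lift1[OF rc_mod2] rc_divpow a b rc_const)
  thus ?thesis by (rule rp_cong) (simp add: set_decode_def odd_iff_mod_2_eq_one)
qed




definition E :: "nat set \<Rightarrow> nat \<Rightarrow> nat" where
  "E G u = set_encode (G \<inter> {..<u})"

lemma E_mem: "x < u \<Longrightarrow> (x \<in> set_decode (E G u)) = (x \<in> G)"
  unfolding E_def by (subst set_encode_inverse) auto

definition apx :: "nat set \<Rightarrow> nat \<Rightarrow> (nat list \<Rightarrow> nat) \<Rightarrow> (nat list \<Rightarrow> nat) \<Rightarrow> bool" where
  "apx G n f A \<longleftrightarrow> (\<forall>xs. length xs = n \<longrightarrow>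
     (\<forall>u. A (xs @ [E G u, u]) = 0 \<or> A (xs @ [E G u, u]) = Suc (f xs)) \<and>
     (\<exists>u0. \<forall>u\<ge>u0. A (xs @ [E G u, u]) = Suc (f xs)))"

lemma join_mem: "q \<in> join G C \<longleftrightarrow> (if even q then q div 2 \<in> G else q div 2 \<in> C)"
proof -
  have "q \<in> {2 * x |x. x \<in> G} \<longleftrightarrow> even q \<and> q div 2 \<in> G" by auto
  moreover have "q \<in> {2 * x + 1 |x. x \<in> C} \<longleftrightarrow> odd q \<and> q div 2 \<in> C"
    by (auto elim!: oddE)
  ultimately show ?thesis unfolding join_def by auto
qed

lemma fin_bound:
  assumes "finite I" "\<forall>i\<in>I. \<exists>u0. \<forall>u\<ge>u0. P i (u::nat)"
  shows "\<exists>u0. \<forall>u\<ge>u0. \<forall>i\<in>I. P i u"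
  using assms
proof (induct I rule: finite_induct)
  case empty then show ?case by auto
next
  case (insert a I)
  then obtain u1 where "\<forall>u\<ge>u1. \<forall>i\<in>I. P i u" by auto
  moreover obtain u2 where "\<forall>u\<ge>u2. P a u" using insert by auto
  ultimately show ?case by (intro exI[of _ "max u1 u2"]) auto
qed

lemma rp_true: "rp X n (\<lambda>_. True)"
  unfolding rp_def using rc_const[of X n 1] by simp

lemma rp_list_all: "\<forall>h\<in>set L. rc X n (F h) \<Longrightarrow> rp X n (\<lambda>ys. \<forall>h\<in>set L. F h ys \<noteq> 0)"
proof (induct L)
  case Nil then show ?case using rp_true by simp
next
  case (Cons a L)
  have "rp X n (\<lambda>ys. F a ys \<noteq> 0 \<and> (\<forall>h\<in>set L. F h ys \<noteq> 0))"
    using Cons by (intro rp_and rp_not rp_eq rc_const) auto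
  thus ?case by simp
qed

definition sc :: "(nat \<Rightarrow> nat) \<Rightarrow> nat \<Rightarrow> nat" where
  "sc a k = rec_nat 0 (\<lambda>k r. if r = 0 then (if a k = 0 then 1 else if a k = 1 then k + 2 else 0) else r) k"

lemma sc_Suc: "sc a (Suc k) = (if sc a k = 0 then (if a k = 0 then 1 else if a k = 1 then k + 2 else 0) else sc a k)"
  by (simp add: sc_def)

lemma sc_0: "sc a 0 = 0" by (simp add: sc_def)

lemma sc_zero: "sc a k = 0 \<Longrightarrow> \<forall>y<k. a y \<ge> 2"
  by (induct k) (auto simp: sc_0 sc_Suc less_Suc_eq split: if_splits)

lemma sc_sound: "sc a k = Suc (Suc y) \<Longrightarrow> y < k \<and> a y = 1 \<and> (\<forall>y'<y. a y' \<ge> 2)"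
proof (induct k)
  case 0 then show ?case by (simp add: sc_0)
next
  case (Suc k)
  show ?case
  proof (cases "sc a k = 0")
    case True
    with Suc.prems have "a k = 1" "y = k" by (auto simp: sc_Suc split: if_splits)
    with sc_zero[OF True] show ?thesis by auto
  next
    case False
    with Suc show ?thesis by (auto simp: sc_Suc)
  qed
qed

lemma sc_zero_rev: "\<forall>y'<k. a y' \<ge> 2 \<Longrightarrow> sc a k = 0"
proof (induct k)
  case 0 then show ?case by (simp add: sc_0)
next
  case (Suc k)
  then have "a k \<ge> 2" "sc a k = 0" by auto
  thus ?case by (simp add: sc_Suc)
qed

lemma sc_complete: "\<forall>y'<y. a y' \<ge> 2 \<Longrightarrow> a y = 1 \<Longrightarrow> y < k \<Longrightarrow> sc a k = Suc (Suc y)"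
proof (induct k)
  case 0 then show ?case by simp
next
  case (Suc k)
  show ?case
  proof (cases "y < k")
    case True then show ?thesis using Suc by (simp add: sc_Suc)
  next
    case False
    with Suc.prems have "y = k" by auto
    have "sc a k = 0" using sc_zero_rev Suc.prems \<open>y = k\<close> by auto
    with Suc.prems \<open>y = k\<close> show ?thesis by (simp add: sc_Suc)
  qed
qed




lemma nth_app2: "length xs = n \<Longrightarrow> (xs @ [a, b]) ! n = a \<and> (xs @ [a, b]) ! Suc n = b"
  by (simp add: nth_append)

lemma rc_pred': "rc X n a \<Longrightarrow> rc X n (\<lambda>xs. a xs - Suc 0)"
  using rc_pred by simp

lemma apx_zero: "apx G n (\<lambda>_. 0) (\<lambda>_. 1)"
  unfolding apx_def by auto

lemma apx_succ: "apx G 1 (\<lambda>xs. Suc (hd xs)) (\<lambda>ys. Suc (Suc (ys!0)))"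
  unfolding apx_def by (auto simp: length_Suc_conv)

lemma apx_proj: "i < n \<Longrightarrow> apx G n (\<lambda>xs. xs!i) (\<lambda>ys. Suc (ys!i))"
  unfolding apx_def by (auto simp: nth_append)

definition Achar :: "nat set \<Rightarrow> nat list \<Rightarrow> nat" where
  "Achar C ys = (if even (ys!0) then (if ys!0 div 2 < ys!2 then (if ys!0 div 2 \<in> set_decode (ys!1) then 2 else 1) else 0)
     else (if ys!0 div 2 \<in> C then 2 else 1))"

lemma rp_even: "rc X n a \<Longrightarrow> rp X n (\<lambda>xs. even (a xs))"
proof -
  assume a: "rc X n a"
  have "rp X n (\<lambda>xs. a xs mod 2 = 0)" by (intro rp_eq rc_lift1[OF rc_mod2] a rc_const)
  thus ?thesis by (rule rp_cong) auto
qed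

lemma rc_Achar: "rc C 3 (Achar C)"
  unfolding Achar_def[abs_def]
  apply (rule rc_ifp)
  apply (rule rp_even)
  apply (rule rc_proj, simp)
  apply (rule rc_ifp)
  apply (rule rp_less)
  apply (rule rc_lift1[OF rc_div2], rule rc_proj, simp)
  apply (rule rc_proj, simp)
  apply (rule rc_ifp)
  apply (rule rp_bit)
  apply (rule rc_lift1[OF rc_div2], rule rc_proj, simp)
  apply (rule rc_proj, simp)
  apply (rule rc_const)+
  apply (rule rc_ifp)
  apply (rule rp_memX)
  apply (rule rc_lift1[OF rc_div2], rule rc_proj, simp)
  apply (rule rc_const)+
  done

lemma apx_char: "apx G 1 (\<lambda>xs. if hd xs \<in> join G C then 1 else 0) (Achar C)"
  unfolding apx_def
proof (rule allI, rule impI, rule conjI)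
  fix xs :: "nat list" assume "length xs = 1"
  then obtain q where xs: "xs = [q]" by (auto simp: length_Suc_conv)
  show "\<forall>u. Achar C (xs @ [E G u, u]) = 0 \<or> Achar C (xs @ [E G u, u]) = Suc (if hd xs \<in> join G C then 1 else 0)"
    by (auto simp: xs Achar_def join_mem E_mem)
  show "\<exists>u0. \<forall>u\<ge>u0. Achar C (xs @ [E G u, u]) = Suc (if hd xs \<in> join G C then 1 else 0)"
    by (rule exI[of _ "Suc (q div 2)"]) (auto simp: xs Achar_def join_mem E_mem)
qed

lemma comp_case:
  assumes Ag: "rc C (m+2) Ag" "apx G m g Ag" and len: "length gs = m"
    and hs: "\<forall>h\<in>set gs. \<exists>Ah. rc C (n+2) Ah \<and> apx G n h Ah"
  shows "\<exists>A. rc C (n+2) A \<and> apx G n (\<lambda>xs. g (map (\<lambda>h. h xs) gs)) A"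
proof -
  define ch where "ch h = (SOME Ah. rc C (n+2) Ah \<and> apx G n h Ah)" for h
  have ch: "rc C (n+2) (ch h) \<and> apx G n h (ch h)" if "h \<in> set gs" for h
    unfolding ch_def using hs that by (metis (mono_tags, lifting) someI_ex)
  have chS: "rc C (Suc (Suc n)) (ch h)" if "h \<in> set gs" for h using ch[OF that] by simp
  define A where "A ys = (if \<forall>h\<in>set gs. ch h ys \<noteq> 0 then Ag (map (\<lambda>h. ch h ys - 1) gs @ [ys!n, ys!(n+1)]) else 0)" for ys
  have r1: "rc C (n+2) (\<lambda>ys. Ag (map (\<lambda>h. h ys) (map (\<lambda>h ys. ch h ys - 1) gs @ [\<lambda>ys. ys!n, \<lambda>ys. ys!(n+1)])))"
    apply (rule rc_comp[OF Ag(1)])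
    using chS by (auto simp: len intro!: rc_pred' rc_proj)
  have "rc C (n+2) A" unfolding A_def[abs_def]
    apply (rule rc_ifp[OF rp_list_all rc_cong[OF r1] rc_const])
    using chS by (auto simp: comp_def)
  moreover have "apx G n (\<lambda>xs. g (map (\<lambda>h. h xs) gs)) A"
    unfolding apx_def
  proof (rule allI, rule impI, rule conjI)
    fix xs :: "nat list" assume lx: "length xs = n"
    have hsnd: "ch h (xs @ [E G u, u]) = 0 \<or> ch h (xs @ [E G u, u]) = Suc (h xs)" if "h \<in> set gs" for h u
      using ch[OF that] lx unfolding apx_def by blast
    have lm: "length (map (\<lambda>h. h xs) gs) = m" using len by simp
    show "\<forall>u. A (xs @ [E G u, u]) = 0 \<or> A (xs @ [E G u, u]) = Suc (g (map (\<lambda>h. h xs) gs))"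
    proof
      fix u
      show "A (xs @ [E G u, u]) = 0 \<or> A (xs @ [E G u, u]) = Suc (g (map (\<lambda>h. h xs) gs))"
      proof (cases "\<forall>h\<in>set gs. ch h (xs @ [E G u, u]) \<noteq> 0")
        case True
        then have mq: "map (\<lambda>h. ch h (xs @ [E G u, u]) - 1) gs = map (\<lambda>h. h xs) gs"
          using hsnd by (intro map_cong) (metis diff_Suc_1)+
        have "A (xs @ [E G u, u]) = Ag (map (\<lambda>h. ch h (xs @ [E G u, u]) - 1) gs @ [E G u, u])"
          using True by (simp add: A_def nth_app2[OF lx])
        also have "\<dots> = Ag (map (\<lambda>h. h xs) gs @ [E G u, u])" by (simp only: mq)
        finally show ?thesis using Ag(2) lm unfolding apx_def by auto
      qed (auto simp: A_def)
    qed
    obtain u1 where u1: "\<forall>u\<ge>u1. \<forall>h\<in>set gs. ch h (xs @ [E G u, u]) = Suc (h xs)"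
      using fin_bound[of "set gs" "\<lambda>h u. ch h (xs @ [E G u, u]) = Suc (h xs)"] ch lx
      unfolding apx_def by auto
    obtain u2 where u2: "\<forall>u\<ge>u2. Ag (map (\<lambda>h. h xs) gs @ [E G u, u]) = Suc (g (map (\<lambda>h. h xs) gs))"
      using Ag(2) lm unfolding apx_def by blast
    show "\<exists>u0. \<forall>u\<ge>u0. A (xs @ [E G u, u]) = Suc (g (map (\<lambda>h. h xs) gs))"
    proof (intro exI allI impI)
      fix u assume "max u1 u2 \<le> u"
      then have a: "\<forall>h\<in>set gs. ch h (xs @ [E G u, u]) = Suc (h xs)" and b: "u2 \<le> u" using u1 by auto
      then have mq: "map (\<lambda>h. ch h (xs @ [E G u, u]) - 1) gs = map (\<lambda>h. h xs) gs"
        by (intro map_cong) auto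
      have "A (xs @ [E G u, u]) = Ag (map (\<lambda>h. ch h (xs @ [E G u, u]) - 1) gs @ [E G u, u])"
        using a by (simp add: A_def nth_app2[OF lx])
      also have "\<dots> = Ag (map (\<lambda>h. h xs) gs @ [E G u, u])" by (simp only: mq)
      finally show "A (xs @ [E G u, u]) = Suc (g (map (\<lambda>h. h xs) gs))"
        using u2 b by simp
    qed
  qed
  ultimately show ?thesis by blast
qed




lemma prim_case:
  assumes Ag: "rc C (n+2) Ag" "apx G n g Ag" and Ah: "rc C (n+2+2) Ah" "apx G (n+2) h Ah"
  shows "\<exists>A. rc C (n+1+2) A \<and> apx G (n+1) (\<lambda>xs. rec_nat (g (tl xs)) (\<lambda>k r. h (k # r # tl xs)) (hd xs)) A"
proof -
  define H where "H zs = (if zs!1 = 0 then 0 else Ah (zs!0 # (zs!1 - 1) # drop 2 zs))" for zs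
  have r1: "rc C (n+2+2) (\<lambda>zs. Ah (map (\<lambda>h. h zs) ((\<lambda>zs. zs!0) # (\<lambda>zs. zs!1 - 1) # map (\<lambda>i zs. zs!(i+2)) [0..<n+2])))"
    by (rule rc_comp[OF Ah(1)]) (auto intro!: rc_proj rc_pred')
  have "rc C (n+2+2) (\<lambda>zs. Ah (zs!0 # (zs!1 - 1) # drop 2 zs))"
  proof (rule rc_cong[OF r1])
    fix zs :: "nat list" assume l: "length zs = n+2+2"
    have e: "map (\<lambda>i. zs!(i+2)) [0..<n+2] = drop 2 zs" by (rule map_drop_nth[OF l])
    show "Ah (map (\<lambda>h. h zs) ((\<lambda>zs. zs!0) # (\<lambda>zs. zs!1 - 1) # map (\<lambda>i zs. zs!(i+2)) [0..<n+2])) = Ah (zs!0 # (zs!1 - 1) # drop 2 zs)"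
      by (simp only: list.map map_map comp_def e)
  qed
  then have rH: "rc C (n+2+2) H" unfolding H_def[abs_def]
    by (intro rc_if rc_proj rc_const) auto
  define A where "A ys = rec_nat (Ag (tl ys)) (\<lambda>k r. H (k # r # tl ys)) (hd ys)" for ys
  have "rc C (n+2+1) A" unfolding A_def[abs_def] by (rule rc_prim[OF Ag(1) rH])
  then have rA: "rc C (n+1+2) A" by (rule rc_cong') auto
  have "apx G (n+1) (\<lambda>xs. rec_nat (g (tl xs)) (\<lambda>k r. h (k # r # tl xs)) (hd xs)) A"
    unfolding apx_def
  proof (rule allI, rule impI)
    fix xs :: "nat list" assume "length xs = n + 1"
    then obtain k rest where xs: "xs = k # rest" and lr: "length rest = n" by (cases xs) auto
    define F where "F k = rec_nat (g rest) (\<lambda>k r. h (k # r # rest)) k" for k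
    define V where "V u k = rec_nat (Ag (rest @ [E G u, u])) (\<lambda>k r. H (k # r # rest @ [E G u, u])) k" for u k
    have AV: "A (xs @ [E G u, u]) = V u k" for u by (simp add: A_def V_def xs)
    have FF: "rec_nat (g (tl xs)) (\<lambda>k r. h (k # r # tl xs)) (hd xs) = F k" by (simp add: F_def xs)
    have VS: "V u (Suc j) = (if V u j = 0 then 0 else Ah (j # (V u j - 1) # rest @ [E G u, u]))" for u j
      by (simp add: V_def H_def)
    have FS: "F (Suc j) = h (j # F j # rest)" for j by (simp add: F_def)
    have lj: "length (j # r # rest) = n + 2" for j r using lr by simp
    have c1: "V u j = 0 \<or> V u j = Suc (F j)" for u j
    proof (induct j)
      case 0 then show ?case using Ag(2) lr unfolding apx_def by (simp add: V_def F_def)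
    next
      case (Suc j)
      then show ?case
      proof
        assume "V u j = 0" thus ?thesis by (simp add: VS)
      next
        assume v: "V u j = Suc (F j)"
        have "Ah ((j # F j # rest) @ [E G u, u]) = 0 \<or> Ah ((j # F j # rest) @ [E G u, u]) = Suc (h (j # F j # rest))"
          using Ah(2) lj unfolding apx_def by blast
        thus ?thesis by (simp add: VS v FS)
      qed
    qed
    have c2: "\<exists>u0. \<forall>u\<ge>u0. V u j = Suc (F j)" for j
    proof (induct j)
      case 0 then show ?case using Ag(2) lr unfolding apx_def by (simp add: V_def F_def)
    next
      case (Suc j)
      then obtain u1 where u1: "\<forall>u\<ge>u1. V u j = Suc (F j)" by blast
      obtain u2 where u2: "\<forall>u\<ge>u2. Ah ((j # F j # rest) @ [E G u, u]) = Suc (h (j # F j # rest))"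
        using Ah(2) lj unfolding apx_def by blast
      show ?case using u1 u2 by (intro exI[of _ "max u1 u2"]) (simp add: VS FS)
    qed
    show "(\<forall>u. A (xs @ [E G u, u]) = 0 \<or> A (xs @ [E G u, u]) = Suc (rec_nat (g (tl xs)) (\<lambda>k r. h (k # r # tl xs)) (hd xs))) \<and>
          (\<exists>u0. \<forall>u\<ge>u0. A (xs @ [E G u, u]) = Suc (rec_nat (g (tl xs)) (\<lambda>k r. h (k # r # tl xs)) (hd xs)))"
      unfolding AV FF using c1 c2 by blast
  qed
  with rA show ?thesis by blast
qed




lemma mu_case:
  assumes Ag: "rc C (n+1+2) Ag" "apx G (n+1) g Ag" and reg: "\<forall>xs. length xs = n \<longrightarrow> (\<exists>y. g (y # xs) = 0)"
  shows "\<exists>A. rc C (n+2) A \<and> apx G n (\<lambda>xs. LEAST y. g (y # xs) = 0) A"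
proof -
  have r1: "rc C (n+2+2) (\<lambda>ws. Ag (map (\<lambda>h. h ws) ((\<lambda>ws. ws!0) # map (\<lambda>i ws. ws!(i+2)) [0..<n+2])))"
    by (rule rc_comp[OF Ag(1)]) (auto intro!: rc_proj)
  have r2: "rc C (n+2+2) (\<lambda>ws. Ag (ws!0 # drop 2 ws))"
  proof (rule rc_cong[OF r1])
    fix zs :: "nat list" assume l: "length zs = n+2+2"
    have e: "map (\<lambda>i. zs!(i+2)) [0..<n+2] = drop 2 zs" by (rule map_drop_nth[OF l])
    show "Ag (map (\<lambda>h. h zs) ((\<lambda>ws. ws!0) # map (\<lambda>i ws. ws!(i+2)) [0..<n+2])) = Ag (zs!0 # drop 2 zs)"
      by (simp only: list.map map_map comp_def e)
  qed
  define Hm where "Hm ws = (if ws!1 = 0 then (if Ag (ws!0 # drop 2 ws) = 0 then 1 else if Ag (ws!0 # drop 2 ws) = 1 then ws!0 + 2 else 0) else ws!1)" for ws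
  have rH: "rc C (n+2+2) Hm" unfolding Hm_def[abs_def]
    by (intro rc_if rc_ifp rp_eq r2 rc_proj rc_const rc_add) auto
  define B where "B xs = rec_nat 0 (\<lambda>k r. Hm (k # r # tl xs)) (hd xs)" for xs
  have rB: "rc C (n+2+1) B" unfolding B_def[abs_def] by (rule rc_prim[OF rc_const rH])
  have Bsc: "B (k # zs) = sc (\<lambda>y. Ag (y # zs)) k" for k zs
    by (induct k) (simp_all add: B_def sc_0 sc_Suc Hm_def)
  define A where "A zs = B (zs!(n+1) # zs) - 1" for zs
  have r3: "rc C (n+2) (\<lambda>zs. B (map (\<lambda>h. h zs) ((\<lambda>zs. zs!(n+1)) # map (\<lambda>i zs. zs!i) [0..<n+2])))"
    by (rule rc_comp[OF rB]) (auto intro!: rc_proj)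
  have "rc C (n+2) (\<lambda>zs. B (zs!(n+1) # zs))"
  proof (rule rc_cong[OF r3])
    fix zs :: "nat list" assume l: "length zs = n+2"
    have e: "map (\<lambda>i. zs!i) [0..<n+2] = zs" using mapnth[OF l] by (simp add: comp_def)
    show "B (map (\<lambda>h. h zs) ((\<lambda>zs. zs!(n+1)) # map (\<lambda>i zs. zs!i) [0..<n+2])) = B (zs!(n+1) # zs)"
      by (simp only: list.map map_map comp_def e)
  qed
  then have rA: "rc C (n+2) A" unfolding A_def[abs_def] by (rule rc_pred)
  have "apx G n (\<lambda>xs. LEAST y. g (y # xs) = 0) A"
    unfolding apx_def
  proof (rule allI, rule impI, rule conjI)
    fix xs :: "nat list" assume lx: "length xs = n"
    define a where "a u y = Ag ((y # xs) @ [E G u, u])" for u y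
    have Aa: "A (xs @ [E G u, u]) = sc (a u) u - 1" for u
      using lx by (simp add: A_def Bsc a_def[abs_def] nth_append)
    have ly: "length (y # xs) = n + 1" for y using lx by simp
    have asnd: "a u y = 0 \<or> a u y = Suc (g (y # xs))" for u y
      using Ag(2) ly unfolding apx_def a_def by blast
    show "\<forall>u. A (xs @ [E G u, u]) = 0 \<or> A (xs @ [E G u, u]) = Suc (LEAST y. g (y # xs) = 0)"
    proof
      fix u
      show "A (xs @ [E G u, u]) = 0 \<or> A (xs @ [E G u, u]) = Suc (LEAST y. g (y # xs) = 0)"
      proof (cases "sc (a u) u \<le> 1")
        case True then show ?thesis by (simp add: Aa)
      next
        case False
        define y where "y = sc (a u) u - 2"
        have s: "sc (a u) u = Suc (Suc y)" using False unfolding y_def by arith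
        from sc_sound[OF s] have y: "a u y = 1" "\<forall>y'<y. a u y' \<ge> 2" by auto
        have "g (y # xs) = 0" using asnd[of u y] y(1) by auto
        moreover have ne: "g (y' # xs) \<noteq> 0" if "y' < y" for y'
        proof -
          have "a u y' \<ge> 2" using y(2) that by blast
          thus ?thesis using asnd[of u y'] by auto
        qed
        ultimately have "(LEAST y. g (y # xs) = 0) = y"
        proof (intro Least_equality)
          fix y' assume "g (y' # xs) = 0" thus "y \<le> y'" using ne by (meson not_le)
        qed
        then show ?thesis by (simp add: Aa s)
      qed
    qed
    obtain L where L: "L = (LEAST y. g (y # xs) = 0)" by blast
    have ex: "\<exists>y. g (y # xs) = 0" using reg lx by blast
    have gL: "g (L # xs) = 0" using LeastI_ex[OF ex] L by simp
    have gl: "g (y' # xs) \<noteq> 0" if "y' < L" for y' using not_less_Least L that by blast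
    have "\<forall>y\<in>{..L}. \<exists>u0. \<forall>u\<ge>u0. a u y = Suc (g (y # xs))"
    proof
      fix y
      show "\<exists>u0. \<forall>u\<ge>u0. a u y = Suc (g (y # xs))"
        using Ag(2) ly[of y] unfolding apx_def a_def by blast
    qed
    then obtain u0 where u0: "\<forall>u\<ge>u0. \<forall>y\<in>{..L}. a u y = Suc (g (y # xs))"
      using fin_bound[of "{..L}" "\<lambda>y u. a u y = Suc (g (y # xs))"] by blast
    show "\<exists>u0. \<forall>u\<ge>u0. A (xs @ [E G u, u]) = Suc (LEAST y. g (y # xs) = 0)"
    proof (intro exI allI impI)
      fix u assume "max u0 (Suc L) \<le> u"
      then have uu: "\<forall>y\<in>{..L}. a u y = Suc (g (y # xs))" "L < u" using u0 by auto
      have "\<forall>y'<L. a u y' \<ge> 2" using uu gl by (auto simp: Suc_le_eq)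
      moreover have "a u L = 1" using uu gL by auto
      ultimately have "sc (a u) u = Suc (Suc L)" using sc_complete uu(2) by blast
      then show "A (xs @ [E G u, u]) = Suc (LEAST y. g (y # xs) = 0)" by (simp add: Aa L)
    qed
  qed
  with rA show ?thesis by blast
qed




lemma approx: "orec (join G C) n f \<Longrightarrow> \<exists>A. rc C (n+2) A \<and> apx G n f A"
proof (induction rule: orec.induct)
  case (zero n) show ?case using rc_const[of C "n+2" 1] apx_zero by blast
next
  case succ
  have "rc C (1+2) (\<lambda>ys. Suc (Suc (ys!0)))" by (intro rc_Suc rc_proj) simp
  then show ?case using apx_succ by blast
next
  case (proj i n)
  have "rc C (n+2) (\<lambda>ys. Suc (ys!i))" using proj by (intro rc_Suc rc_proj) simp
  then show ?case using apx_proj[OF proj] by blast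
next
  case char_X
  have "rc C (1+2) (Achar C)" using rc_Achar by (simp add: numeral_3_eq_3)
  then show ?case using apx_char by blast
next
  case (comp m g gs n)
  then obtain Ag where Ag: "rc C (m+2) Ag" "apx G m g Ag" by blast
  have len: "length gs = m" using comp by blast
  have hs: "\<forall>h\<in>set gs. \<exists>Ah. rc C (n+2) Ah \<and> apx G n h Ah" using comp by blast
  show ?case by (rule comp_case[OF Ag len hs])
next
  case (prim_rec n g h)
  then obtain Ag Ah where "rc C (n+2) Ag" "apx G n g Ag" "rc C (n+2+2) Ah" "apx G (n+2) h Ah" by blast
  from prim_case[OF this] show ?case by blast
next
  case (mu n g)
  then obtain Ag where "rc C (n+1+2) Ag" "apx G (n+1) g Ag" by blast
  from mu_case[OF this mu.hyps(2)] show ?case by blast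
qed

datatype prog = PZ | PS | PP nat | PC | PCm prog "prog list" | PR prog prog | PM prog

instance prog :: countable by countable_datatype

fun eval :: "nat set \<Rightarrow> prog \<Rightarrow> nat list \<Rightarrow> nat" where
  "eval X PZ xs = 0"
| "eval X PS xs = Suc (hd xs)"
| "eval X (PP i) xs = xs ! i"
| "eval X PC xs = (if hd xs \<in> X then 1 else 0)"
| "eval X (PCm p ps) xs = eval X p (map (\<lambda>q. eval X q xs) ps)"
| "eval X (PR p q) xs = rec_nat (eval X p (tl xs)) (\<lambda>k r. eval X q (k # r # tl xs)) (hd xs)"
| "eval X (PM p) xs = (LEAST y. eval X p (y # xs) = 0)"

lemma orec_prog: "orec X n f \<Longrightarrow> \<exists>p. \<forall>xs. length xs = n \<longrightarrow> f xs = eval X p xs"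
proof (induction rule: orec.induct)
  case (zero n) show ?case by (rule exI[of _ PZ]) simp
next
  case succ show ?case by (rule exI[of _ PS]) simp
next
  case (proj i n) show ?case by (rule exI[of _ "PP i"]) simp
next
  case char_X show ?case by (rule exI[of _ PC]) simp
next
  case (comp m g gs n)
  then obtain p where p: "\<forall>xs. length xs = m \<longrightarrow> g xs = eval X p xs" by blast
  define ch where "ch h = (SOME q. \<forall>xs. length xs = n \<longrightarrow> h xs = eval X q xs)" for h
  have ch: "\<forall>xs. length xs = n \<longrightarrow> h xs = eval X (ch h) xs" if "h \<in> set gs" for h
  proof -
    have "\<exists>q. \<forall>xs. length xs = n \<longrightarrow> h xs = eval X q xs" using comp.IH(2) that by blast
    thus ?thesis unfolding ch_def by (rule someI_ex)
  qed
  show ?case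
  proof (intro exI[of _ "PCm p (map ch gs)"] allI impI)
    fix xs :: "nat list" assume "length xs = n"
    then have e: "map (\<lambda>h. h xs) gs = map (\<lambda>q. eval X q xs) (map ch gs)"
      using ch by (auto simp: comp_def)
    have "g (map (\<lambda>h. h xs) gs) = eval X p (map (\<lambda>h. h xs) gs)" using p comp.hyps(2) by simp
    also have "\<dots> = eval X (PCm p (map ch gs)) xs" unfolding e by simp
    finally show "g (map (\<lambda>h. h xs) gs) = eval X (PCm p (map ch gs)) xs" .
  qed
next
  case (prim_rec n g h)
  then obtain p q where p: "\<forall>xs. length xs = n \<longrightarrow> g xs = eval X p xs"
    and q: "\<forall>xs. length xs = n + 2 \<longrightarrow> h xs = eval X q xs" by blast
  show ?case
  proof (intro exI[of _ "PR p q"] allI impI)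
    fix xs :: "nat list" assume l: "length xs = n + 1"
    show "rec_nat (g (tl xs)) (\<lambda>k r. h (k # r # tl xs)) (hd xs) = eval X (PR p q) xs"
    proof -
      have "rec_nat (g (tl xs)) (\<lambda>k r. h (k # r # tl xs)) j = rec_nat (eval X p (tl xs)) (\<lambda>k r. eval X q (k # r # tl xs)) j" for j
        using l p q by (induct j) auto
      thus ?thesis by simp
    qed
  qed
next
  case (mu n g)
  then obtain p where p: "\<forall>xs. length xs = n + 1 \<longrightarrow> g xs = eval X p xs" by blast
  show ?case
  proof (intro exI[of _ "PM p"] allI impI)
    fix xs :: "nat list" assume l: "length xs = n"
    show "(LEAST y. g (y # xs) = 0) = eval X (PM p) xs" using l p by simp
  qed
qed

lemma rc_prog: "rc X n f \<Longrightarrow> \<exists>p. \<forall>xs. length xs = n \<longrightarrow> f xs = eval X p xs"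
  unfolding rc_def using orec_prog by metis

lemma apx_cong: "apx G n f A \<Longrightarrow> (\<And>xs. length xs = n + 2 \<Longrightarrow> A xs = A' xs) \<Longrightarrow> apx G n f A'"
  unfolding apx_def by simp




lemma decode_bound: "set_decode d \<subseteq> {..<u} \<longleftrightarrow> d div 2 ^ u = 0"
proof
  assume a: "set_decode d \<subseteq> {..<u}"
  show "d div 2 ^ u = 0"
  proof (rule ccontr)
    assume "d div 2 ^ u \<noteq> 0"
    then have "set_decode (d div 2 ^ u) \<noteq> {}"
      by (metis set_decode_inverse set_encode_empty)
    then obtain j where "odd (d div 2 ^ u div 2 ^ j)" unfolding set_decode_def by auto
    then have "u + j \<in> set_decode d" unfolding set_decode_def by (simp add: div_mult2_eq power_add)
    with a show False by auto
  qed
next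
  assume a: "d div 2 ^ u = 0"
  show "set_decode d \<subseteq> {..<u}"
  proof
    fix q assume q: "q \<in> set_decode d"
    show "q \<in> {..<u}"
    proof (rule ccontr)
      assume "q \<notin> {..<u}"
      then have "q = u + (q - u)" by auto
      then have "d div 2 ^ q = d div 2 ^ u div 2 ^ (q - u)"
        by (metis div_mult2_eq power_add)
      with a q show False unfolding set_decode_def by simp
    qed
  qed
qed

definition psi :: "(nat list \<Rightarrow> nat) \<Rightarrow> nat set \<Rightarrow> nat set \<Rightarrow> nat set" where
  "psi A F Y = {x. \<exists>y d u. A [x, y, d, u] = 1 \<and> set_decode d \<subseteq> {..<u} \<and> F \<subseteq> set_decode d \<and> set_decode d \<subseteq> F \<union> Y}"

lemma rp_comp1: "rp X 1 (\<lambda>xs. P (xs!0)) \<Longrightarrow> rc X n a \<Longrightarrow> rp X n (\<lambda>xs. P (a xs))"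
  unfolding rp_def by (drule rc_lift1[where F="\<lambda>v. if P v then 1 else 0"]) auto

lemma psi_sigma:
  assumes A: "rc C 4 A" and F: "finite F" and Y: "rp C 1 (\<lambda>xs. xs!0 \<in> Y)"
  shows "sigma1_rel C (psi A F Y)"
proof -
  obtain c where c: "F \<subseteq> {..<c}" using F unfolding finite_nat_set_iff_bounded by auto
  define eF where "eF = set_encode F"
  have eF: "q \<in> set_decode eF \<longleftrightarrow> q \<in> F" for q unfolding eF_def using F by simp
  define Q1 where "Q1 zs = ((zs!0 \<in> set_decode eF \<longrightarrow> zs!0 \<in> set_decode (zs!2)) \<and>
       (zs!0 \<in> set_decode (zs!2) \<longrightarrow> zs!0 \<in> set_decode eF \<or> zs!0 \<in> Y))" for zs
  have q1: "rp C 6 Q1" unfolding Q1_def[abs_def]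
    by (intro rp_and rp_imp rp_or rp_bit rp_comp1[OF Y] rc_proj rc_const) auto
  define Q2 where "Q2 ws = (A [ws!3, ws!2, ws!1, ws!0] = 1 \<and> ws!1 div 2 ^ (ws!0) = 0 \<and>
      (\<forall>q < ws!0 + c. Q1 (q # ws)))" for ws
  have q2: "rp C 5 Q2" unfolding Q2_def[abs_def]
    by (intro rp_and rp_eq rc_comp4[OF A] rc_divpow rp_ball[of C 5, simplified, OF q1[simplified]] rc_add rc_proj rc_const) auto
  define Q3 where "Q3 vs = (\<exists>u < vs!3. Q2 (u # vs))" for vs
  have q3: "rp C 4 Q3" unfolding Q3_def[abs_def]
    by (rule rp_bex[of C 4, simplified, OF q2[simplified]]) (auto intro: rc_proj)
  define Q4 where "Q4 vs = (\<exists>d < vs!2. Q3 (d # vs))" for vs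
  have q4: "rp C 3 Q4" unfolding Q4_def[abs_def]
    by (rule rp_bex[of C 3, simplified, OF q3[simplified]]) (auto intro: rc_proj)
  define Q5 where "Q5 vs = (\<exists>y < vs!1. Q4 (y # vs))" for vs
  have q5: "rp C 2 Q5" unfolding Q5_def[abs_def]
    by (rule rp_bex[of C 2, simplified, OF q4[simplified]]) (auto intro: rc_proj)
  have "rc C 2 (\<lambda>xs. if Q5 xs then 0 else 1)" by (rule rc_ifp[OF q5 rc_const rc_const])
  then obtain g where g: "orec C 2 g" "\<And>xs. length xs = 2 \<Longrightarrow> (if Q5 xs then 0 else 1) = g xs"
    unfolding rc_def by blast
  have Q5x: "Q5 [x, w] \<longleftrightarrow> (\<exists>y<w. \<exists>d<w. \<exists>u<w. A [x, y, d, u] = 1 \<and> d div 2 ^ u = 0 \<and>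
       (\<forall>q < u + c. (q \<in> F \<longrightarrow> q \<in> set_decode d) \<and> (q \<in> set_decode d \<longrightarrow> q \<in> F \<or> q \<in> Y)))" for x w
    by (simp add: Q5_def Q4_def Q3_def Q2_def Q1_def eF)
  have key: "x \<in> psi A F Y \<longleftrightarrow> (\<exists>w. Q5 [x, w])" for x
  proof
    assume "x \<in> psi A F Y"
    then obtain y d u where h: "A [x, y, d, u] = 1" "set_decode d \<subseteq> {..<u}" "F \<subseteq> set_decode d" "set_decode d \<subseteq> F \<union> Y"
      unfolding psi_def by blast
    have dd: "d div 2 ^ u = 0" using h(2) decode_bound by blast
    have b: "y < Suc (y + d + u)" "d < Suc (y + d + u)" "u < Suc (y + d + u)" by auto
    have q: "\<forall>q < u + c. (q \<in> F \<longrightarrow> q \<in> set_decode d) \<and> (q \<in> set_decode d \<longrightarrow> q \<in> F \<or> q \<in> Y)"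
      using h by auto
    have "Q5 [x, Suc (y + d + u)]" unfolding Q5x using b q dd h(1) by blast
    then show "\<exists>w. Q5 [x, w]" by blast
  next
    assume "\<exists>w. Q5 [x, w]"
    then obtain y d u where h: "A [x, y, d, u] = 1" "d div 2 ^ u = 0"
      "\<forall>q < u + c. (q \<in> F \<longrightarrow> q \<in> set_decode d) \<and> (q \<in> set_decode d \<longrightarrow> q \<in> F \<or> q \<in> Y)"
      unfolding Q5x by blast
    have sd: "set_decode d \<subseteq> {..<u}" using h(2) decode_bound by blast
    have "F \<subseteq> set_decode d" using h(3) c by force
    moreover have "set_decode d \<subseteq> F \<union> Y"
    proof
      fix q assume "q \<in> set_decode d"
      moreover then have "q < u + c" using sd by auto
      ultimately show "q \<in> F \<union> Y" using h(3) by blast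
    qed
    ultimately show "x \<in> psi A F Y" unfolding psi_def using h(1) sd by blast
  qed
  have gg: "g [x, w] = 0 \<longleftrightarrow> Q5 [x, w]" for x w
    using g(2)[of "[x, w]"] by (auto split: if_splits)
  show ?thesis unfolding sigma1_rel_def
    using g(1) gg key by blast
qed




lemma inf_split: "infinite A \<Longrightarrow> A \<subseteq> B \<union> D \<Longrightarrow> finite D \<Longrightarrow> infinite B"
  using finite_subset by blast

locale setting =
  fixes C :: "nat set" and R :: "nat \<Rightarrow> nat set" and k :: nat and A0 A1 :: "str set"
  assumes fairC: "n_fair k C A0 A1" and unifR: "unif_computable C R"
begin

definition valid :: "nat set \<times> nat set \<Rightarrow> bool" where
  "valid P \<longleftrightarrow> finite (fst P) \<and> infinite (snd P) \<and> rp C 1 (\<lambda>xs. xs!0 \<in> snd P) \<and> (\<forall>x\<in>snd P. \<forall>y\<in>fst P. y < x)"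

definition ext :: "nat set \<times> nat set \<Rightarrow> nat set \<times> nat set \<Rightarrow> bool" where
  "ext P Q \<longleftrightarrow> fst P \<subseteq> fst Q \<and> fst Q - fst P \<subseteq> snd P \<and> snd Q \<subseteq> snd P"

lemma ext_refl: "ext P P" unfolding ext_def by auto

lemma ext_trans: "ext P Q \<Longrightarrow> ext Q S \<Longrightarrow> ext P S" unfolding ext_def by auto

definition coh :: "nat \<Rightarrow> nat set \<times> nat set \<Rightarrow> nat set \<times> nat set" where
  "coh e P = (if infinite (snd P \<inter> R e) then (fst P, snd P \<inter> R e) else (fst P, snd P - R e))"

definition infs :: "nat set \<times> nat set \<Rightarrow> nat set \<times> nat set" where
  "infs P = (insert ((LEAST x. x \<in> snd P)) (fst P), {x\<in>snd P. (LEAST x. x \<in> snd P) < x})"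

definition Mat :: "str list list \<Rightarrow> nat \<Rightarrow> nat \<Rightarrow> str" where
  "Mat Ml i j = Ml ! i ! j"

definition good :: "prog \<Rightarrow> nat \<Rightarrow> str list list \<Rightarrow> nat set \<times> nat set \<Rightarrow> nat \<Rightarrow> nat \<Rightarrow> bool" where
  "good p m Ml P d u \<longleftrightarrow> (\<exists>V y. valuation m (2^k*m) (Mat Ml) V \<and> diagonalizes m (2^k*m) V A0 A1 \<and>
     eval C p [val_code m (2^k*m) V, y, d, u] = 1 \<and> set_decode d \<subseteq> {..<u} \<and> fst P \<subseteq> set_decode d \<and>
     set_decode d \<subseteq> fst P \<union> snd P)"

definition trig :: "prog \<Rightarrow> nat \<Rightarrow> str list list \<Rightarrow> nat set \<times> nat set \<Rightarrow> bool" where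
  "trig p m Ml P \<longleftrightarrow> rc C 4 (eval C p) \<and> disjoint_matrix m (2^k*m) (Mat Ml) \<and>
     essential m (2^k*m) (psi (eval C p) (fst P) (snd P)) (Mat Ml)"

definition reqs :: "prog \<times> nat \<times> str list list \<Rightarrow> nat set \<times> nat set \<Rightarrow> nat set \<times> nat set" where
  "reqs r P = (case r of (p, m, Ml) \<Rightarrow> if trig p m Ml P then
      (let du = (SOME du. good p m Ml P (fst du) (snd du)) in (set_decode (fst du), {x\<in>snd P. snd du \<le> x}))
    else P)"

lemma trig_good: assumes "valid P" "trig p m Ml P" shows "\<exists>d u. good p m Ml P d u"
proof -
  let ?n = "2^k*m" and ?S = "psi (eval C p) (fst P) (snd P)"
  have "sigma1_rel C ?S"
    using assms unfolding valid_def trig_def by (intro psi_sigma) auto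
  moreover have "disjoint_matrix m ?n (Mat Ml)" "essential m ?n ?S (Mat Ml)"
    using assms(2) unfolding trig_def by auto
  ultimately obtain V where V: "valuation m ?n (Mat Ml) V" "diagonalizes m ?n V A0 A1" "holds m ?n ?S V"
    using fairC[unfolded n_fair_def, rule_format, of ?S m "Mat Ml"] by blast
  then show ?thesis unfolding holds_def psi_def good_def by blast
qed

lemma reqs_good: assumes "valid P" "trig p m Ml P"
  shows "\<exists>d u. good p m Ml P d u \<and> reqs (p, m, Ml) P = (set_decode d, {x\<in>snd P. u \<le> x})"
proof -
  define du where "du = (SOME du. good p m Ml P (fst du) (snd du))"
  have "\<exists>du. good p m Ml P (fst du) (snd du)" using trig_good[OF assms] by auto
  then have "good p m Ml P (fst du) (snd du)" unfolding du_def by (rule someI_ex)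
  moreover have "reqs (p, m, Ml) P = (set_decode (fst du), {x\<in>snd P. snd du \<le> x})"
    using assms(2) unfolding reqs_def du_def by (simp add: Let_def)
  ultimately show ?thesis by blast
qed

lemma rp_R: "rp C 1 (\<lambda>xs. xs!0 \<in> R e)"
proof -
  obtain f where f: "orec C 2 f" "\<forall>i x. f [i, x] = (if x \<in> R i then 1 else 0)"
    using unifR unfolding unif_computable_def by blast
  have "rc C 1 (\<lambda>xs. f [e, xs!0])" by (rule rc_comp2[OF orec_rc[OF f(1)] rc_const rc_proj]) simp
  then show ?thesis unfolding rp_def using f(2) by simp
qed

lemma valid_coh: assumes "valid P" shows "valid (coh e P)"
proof (cases "infinite (snd P \<inter> R e)")
  case True
  have "rp C 1 (\<lambda>xs. xs!0 \<in> snd P \<and> xs!0 \<in> R e)"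
    using assms unfolding valid_def by (intro rp_and rp_R) auto
  then show ?thesis using True assms unfolding valid_def coh_def by auto
next
  case False
  have "snd P \<subseteq> (snd P - R e) \<union> (snd P \<inter> R e)" by auto
  moreover have "infinite (snd P)" using assms unfolding valid_def by simp
  ultimately have inf: "infinite (snd P - R e)" using False inf_split by blast
  have "rp C 1 (\<lambda>xs. xs!0 \<in> snd P \<and> \<not> xs!0 \<in> R e)"
    using assms unfolding valid_def by (intro rp_and rp_not rp_R) auto
  then show ?thesis using False inf assms unfolding valid_def coh_def by auto
qed

lemma ext_coh: "ext P (coh e P)" unfolding ext_def coh_def by auto

lemma valid_infs: assumes "valid P" shows "valid (infs P)"
proof -
  obtain F Y where P: "P = (F, Y)" by (cases P)
  have ne: "Y \<noteq> {}" using assms P unfolding valid_def by auto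
  have "finite {x\<in>Y. x \<le> (LEAST x. x \<in> Y)}" by (rule finite_subset[of _ "{..(LEAST x. x \<in> Y)}"]) auto
  moreover have "Y \<subseteq> {x\<in>Y. (LEAST x. x \<in> Y) < x} \<union> {x\<in>Y. x \<le> (LEAST x. x \<in> Y)}" by auto
  moreover have "infinite Y" using assms P unfolding valid_def by simp
  ultimately have inf: "infinite {x\<in>Y. (LEAST x. x \<in> Y) < x}" using inf_split by blast
  have rpY: "rp C 1 (\<lambda>xs. xs!0 \<in> Y \<and> (LEAST x. x \<in> Y) < xs!0)"
    using assms P unfolding valid_def by (auto intro!: rp_and rp_less rc_const rc_proj)
  have "(LEAST x. x \<in> Y) \<in> Y" using ne by (auto intro: LeastI)
  then show ?thesis using assms inf rpY unfolding valid_def infs_def P by auto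
qed

lemma ext_infs: assumes "valid P" shows "ext P (infs P)"
proof -
  have "snd P \<noteq> {}" using assms unfolding valid_def by auto
  then have "(LEAST x. x \<in> snd P) \<in> snd P" by (auto intro: LeastI)
  then show ?thesis unfolding ext_def infs_def by auto
qed

lemma valid_reqs: assumes "valid P" shows "valid (reqs r P)"
proof -
  obtain p m Ml where r: "r = (p, m, Ml)" by (cases r) auto
  show ?thesis
  proof (cases "trig p m Ml P")
    case True
    from reqs_good[OF assms True] obtain d u where
      g: "good p m Ml P d u" and e: "reqs (p, m, Ml) P = (set_decode d, {x\<in>snd P. u \<le> x})" by blast
    have sd: "set_decode d \<subseteq> {..<u}" using g unfolding good_def by blast
    have "finite {x\<in>snd P. x < u}" by auto
    moreover have "snd P \<subseteq> {x\<in>snd P. u \<le> x} \<union> {x\<in>snd P. x < u}" by auto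
    moreover have "infinite (snd P)" using assms unfolding valid_def by simp
    ultimately have inf: "infinite {x\<in>snd P. u \<le> x}" using inf_split by blast
    have rpY: "rp C 1 (\<lambda>xs. xs!0 \<in> snd P \<and> \<not> xs!0 < u)"
      using assms unfolding valid_def by (auto intro!: rp_and rp_not rp_less rc_const rc_proj)
    show ?thesis unfolding r e valid_def using inf sd rpY by (auto simp: not_less)
  next
    case False then show ?thesis using assms by (simp add: r reqs_def)
  qed
qed

lemma ext_reqs: assumes "valid P" shows "ext P (reqs r P)"
proof -
  obtain p m Ml where r: "r = (p, m, Ml)" by (cases r) auto
  show ?thesis
  proof (cases "trig p m Ml P")
    case True
    from reqs_good[OF assms True] obtain d u where
      g: "good p m Ml P d u" and e: "reqs (p, m, Ml) P = (set_decode d, {x\<in>snd P. u \<le> x})" by blast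
    then show ?thesis unfolding r e ext_def good_def by auto
  next
    case False then show ?thesis by (simp add: r reqs_def ext_refl)
  qed
qed

primrec cs :: "nat \<Rightarrow> nat set \<times> nat set" where
  "cs 0 = ({}, UNIV)"
| "cs (Suc s) = reqs (from_nat s) (infs (coh s (cs s)))"

lemma valid_cs: "valid (cs s)"
proof (induct s)
  case 0
  have "rp C 1 (\<lambda>xs. xs!0 \<in> (UNIV::nat set))" using rp_true by simp
  then show ?case unfolding valid_def by simp
next
  case (Suc s) then show ?case by (simp add: valid_reqs valid_infs valid_coh)
qed

lemma ext_step: "ext (cs s) (cs (Suc s))"
proof -
  have v: "valid (coh s (cs s))" by (rule valid_coh[OF valid_cs])
  have "ext (cs s) (reqs (from_nat s) (infs (coh s (cs s))))"
    by (rule ext_trans[OF ext_coh ext_trans[OF ext_infs[OF v] ext_reqs[OF valid_infs[OF v]]]])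
  then show ?thesis by simp
qed

lemma ext_cs: "s \<le> t \<Longrightarrow> ext (cs s) (cs t)"
proof (induct t)
  case 0 then show ?case by (simp add: ext_refl)
next
  case (Suc t)
  show ?case
  proof (cases "s = Suc t")
    case True then show ?thesis by (simp add: ext_refl)
  next
    case False then have "s \<le> t" using Suc by auto
    then show ?thesis using Suc ext_trans ext_step by blast
  qed
qed

definition G :: "nat set" where "G = (\<Union>s. fst (cs s))"

lemma G_ext: assumes "ext (cs s) P" "ext P (cs (Suc s))"
  shows "fst P \<subseteq> G \<and> G - fst P \<subseteq> snd P"
proof
  have "fst P \<subseteq> fst (cs (Suc s))" using assms(2) unfolding ext_def by blast
  then show "fst P \<subseteq> G" unfolding G_def by blast
  show "G - fst P \<subseteq> snd P"
  proof
    fix x assume x: "x \<in> G - fst P"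
    then obtain t where t: "x \<in> fst (cs t)" unfolding G_def by auto
    show "x \<in> snd P"
    proof (cases "t \<le> s")
      case True
      then have "fst (cs t) \<subseteq> fst (cs s)" using ext_cs unfolding ext_def by blast
      then show ?thesis using x t assms(1) unfolding ext_def by auto
    next
      case False
      then have "ext P (cs t)" using assms(2) ext_cs[of "Suc s" t] ext_trans by auto
      then show ?thesis using x t unfolding ext_def by auto
    qed
  qed
qed

lemma G_cohesive: "cohesive R G"
  unfolding cohesive_def
proof (intro conjI allI)
  fix e
  let ?P = "coh e (cs e)"
  have "ext (cs e) ?P" by (rule ext_coh)
  moreover have "ext ?P (cs (Suc e))"
  proof -
    have v: "valid ?P" by (rule valid_coh[OF valid_cs])
    have "ext ?P (reqs (from_nat e) (infs ?P))"
      by (rule ext_trans[OF ext_infs[OF v] ext_reqs[OF valid_infs[OF v]]])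
    then show ?thesis by simp
  qed
  ultimately have g: "G - fst ?P \<subseteq> snd ?P" using G_ext by blast
  have f: "finite (fst ?P)" using valid_coh[OF valid_cs] unfolding valid_def by blast
  show "finite (G - R e) \<or> finite (G - - R e)"
  proof (cases "infinite (snd (cs e) \<inter> R e)")
    case True
    then have "snd ?P \<subseteq> R e" by (simp add: coh_def)
    then have "G - R e \<subseteq> fst ?P" using g by blast
    then show ?thesis using f finite_subset by blast
  next
    case False
    then have "snd ?P \<subseteq> - R e" by (auto simp add: coh_def)
    then have "G - - R e \<subseteq> fst ?P" using g by blast
    then show ?thesis using f finite_subset by blast
  qed
next
  have card: "s \<le> card (fst (cs s))" for s
  proof (induct s)
    case 0 then show ?case by simp
  next
    case (Suc s)
    let ?Q = "coh s (cs s)"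
    have vQ: "valid ?Q" by (rule valid_coh[OF valid_cs])
    have ne: "snd ?Q \<noteq> {}" using vQ unfolding valid_def by auto
    have "(LEAST x. x \<in> snd ?Q) \<in> snd ?Q" using ne by (auto intro: LeastI)
    then have mn: "(LEAST x. x \<in> snd ?Q) \<notin> fst ?Q" using vQ unfolding valid_def by blast
    have fQ: "fst ?Q = fst (cs s)" unfolding coh_def by simp
    have "fst (infs ?Q) \<subseteq> fst (cs (Suc s))" using ext_reqs[OF valid_infs[OF vQ]] unfolding ext_def by simp
    moreover have "finite (fst (cs (Suc s)))" using valid_cs unfolding valid_def by blast
    ultimately have "card (fst (infs ?Q)) \<le> card (fst (cs (Suc s)))" by (rule card_mono[rotated])
    moreover have "card (fst (infs ?Q)) = Suc (card (fst ?Q))"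
      using mn vQ unfolding infs_def valid_def by simp
    ultimately show ?case using Suc fQ by simp
  qed
  show "infinite G"
  proof
    assume fin: "finite G"
    have "fst (cs (Suc (card G))) \<subseteq> G" unfolding G_def by blast
    then have "card (fst (cs (Suc (card G)))) \<le> card G" using fin by (rule card_mono[rotated])
    with card[of "Suc (card G)"] show False by simp
  qed
qed

end




context setting
begin

lemma G_fair: "n_fair k (join G C) A0 A1"
  unfolding n_fair_def
proof (intro allI impI)
  fix m S M
  assume sig: "sigma1_rel (join G C) S" and dis: "disjoint_matrix m (2^k*m) M"
    and ess: "essential m (2^k*m) S M"
  define n where "n = 2^k*m"
  obtain f where f: "orec (join G C) 2 f" "\<forall>x. x \<in> S \<longleftrightarrow> (\<exists>y. f [x,y] = 0)"
    using sig unfolding sigma1_rel_def by blast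
  obtain A where A: "rc C (2+2) A" "apx G 2 f A" using approx[OF f(1)] by blast
  obtain p where p: "\<forall>xs. length xs = 2+2 \<longrightarrow> A xs = eval C p xs" using rc_prog[OF A(1)] by blast
  have rcp: "rc C 4 (eval C p)"
  proof -
    have "rc C (2+2) (eval C p)" using rc_cong[OF A(1)] p by blast
    thus ?thesis by simp
  qed
  have ap: "apx G 2 f (eval C p)" using apx_cong[OF A(2)] p by blast
  define Ml where "Ml = map (\<lambda>i. map (\<lambda>j. M i j) [0..<n]) [0..<m]"
  have agree: "\<forall>i<m. \<forall>j<n. Mat Ml i j = M i j" by (simp add: Mat_def Ml_def)
  define s where "s = to_nat (p, m, Ml)"
  have fs: "from_nat s = (p, m, Ml)" by (simp add: s_def)
  define P where "P = infs (coh s (cs s))"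
  have vP: "valid P" unfolding P_def by (rule valid_infs[OF valid_coh[OF valid_cs]])
  have csS: "cs (Suc s) = reqs (p, m, Ml) P" by (simp add: P_def fs)
  have eP: "ext (cs s) P" unfolding P_def by (rule ext_trans[OF ext_coh ext_infs[OF valid_coh[OF valid_cs]]])
  have eP2: "ext P (cs (Suc s))" unfolding csS by (rule ext_reqs[OF vP])
  from G_ext[OF eP eP2] have GP: "fst P \<subseteq> G" "G - fst P \<subseteq> snd P" by auto
  have dis': "disjoint_matrix m n (Mat Ml)" using dis agree unfolding disjoint_matrix_def n_def by auto
  have valeq: "valuation m n (Mat Ml) V = valuation m n M V" for V using agree unfolding valuation_def by auto
  have apx2: "(\<forall>u. eval C p ([x,y] @ [E G u, u]) = 0 \<or> eval C p ([x,y] @ [E G u, u]) = Suc (f [x,y])) \<and>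
        (\<exists>u0. \<forall>u\<ge>u0. eval C p ([x,y] @ [E G u, u]) = Suc (f [x,y]))" for x y
  proof -
    have "length [x, y] = 2" by simp
    then show ?thesis using ap unfolding apx_def by blast
  qed
  show "\<exists>V. valuation m (2^k*m) M V \<and> diagonalizes m (2^k*m) V A0 A1 \<and> holds m (2^k*m) S V"
  proof (cases "trig p m Ml P")
    case True
    obtain d u where g: "good p m Ml P d u" and e: "reqs (p,m,Ml) P = (set_decode d, {x\<in>snd P. u \<le> x})"
      using reqs_good[OF vP True] by blast
    obtain V y where V: "valuation m n (Mat Ml) V" "diagonalizes m n V A0 A1"
        "eval C p [val_code m n V, y, d, u] = 1" "set_decode d \<subseteq> {..<u}"
      using g unfolding good_def n_def by blast
    have Q: "fst (cs (Suc s)) \<subseteq> G" "G - fst (cs (Suc s)) \<subseteq> snd (cs (Suc s))"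
      using G_ext[OF ext_refl ext_step] by blast+
    have Q1: "set_decode d \<subseteq> G" "G - set_decode d \<subseteq> {x. u \<le> x}" using Q unfolding csS e by auto
    have "G \<inter> {..<u} = set_decode d"
    proof
      show "G \<inter> {..<u} \<subseteq> set_decode d" using Q1(2) by auto
      show "set_decode d \<subseteq> G \<inter> {..<u}" using Q1(1) V(4) by auto
    qed
    then have Eu: "E G u = d" unfolding E_def by simp
    have "eval C p ([val_code m n V, y] @ [E G u, u]) = 0 \<or> eval C p ([val_code m n V, y] @ [E G u, u]) = Suc (f [val_code m n V, y])"
      using apx2[of "val_code m n V" y] by blast
    then have "f [val_code m n V, y] = 0" using V(3) Eu by auto
    then have "holds m n S V" unfolding holds_def using f(2) by blast
    then show ?thesis using V valeq unfolding n_def by auto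
  next
    case False
    then have "\<not> essential m n (psi (eval C p) (fst P) (snd P)) (Mat Ml)"
      using rcp dis' unfolding trig_def n_def by auto
    then obtain s0 where s0: "\<forall>V. valuation m n (Mat Ml) V \<and> val_gt m n V s0 \<longrightarrow> \<not> holds m n (psi (eval C p) (fst P) (snd P)) V"
      unfolding essential_def by blast
    obtain V where V: "valuation m n M V" "val_gt m n V s0" "holds m n S V"
      using ess unfolding essential_def n_def by blast
    define x where "x = val_code m n V"
    obtain y where y: "f [x, y] = 0" using V(3) f(2) unfolding holds_def x_def by blast
    obtain u0 where u0: "\<forall>u\<ge>u0. eval C p ([x,y] @ [E G u, u]) = Suc (f [x,y])" using apx2 by blast
    have "finite (fst P)" using vP unfolding valid_def by blast
    then obtain c where c: "fst P \<subseteq> {..<c}" unfolding finite_nat_set_iff_bounded by auto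
    define u where "u = max u0 c"
    have sd: "set_decode (E G u) = G \<inter> {..<u}" unfolding E_def by simp
    have ev: "eval C p [x, y, E G u, u] = 1" using u0 y unfolding u_def by simp
    have "fst P \<subseteq> G \<inter> {..<u}" using GP(1) c unfolding u_def by auto
    then have "fst P \<subseteq> set_decode (E G u)" unfolding sd .
    moreover have "set_decode (E G u) \<subseteq> fst P \<union> snd P" using GP(2) unfolding sd by auto
    moreover have "set_decode (E G u) \<subseteq> {..<u}" unfolding sd by auto
    ultimately have "x \<in> psi (eval C p) (fst P) (snd P)" unfolding psi_def using ev by blast
    then have "holds m n (psi (eval C p) (fst P) (snd P)) V" unfolding holds_def x_def .
    then show ?thesis using s0 V valeq by blast
  qed
qed

end

theorem mainTheorem9:
  fixes A0 A1 :: "bool list set" and C :: "nat set" and R :: "nat \<Rightarrow> nat set"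
  assumes "fair C A0 A1"
    and "unif_computable C R"
  shows "\<exists>G. cohesive R G \<and> fair (join G C) A0 A1"
proof -
  obtain k where k: "k \<ge> 1" "n_fair k C A0 A1" using assms(1) unfolding fair_def by blast
  interpret S: setting C R k A0 A1 using k(2) assms(2) by unfold_locales
  have "cohesive R S.G" "fair (join S.G C) A0 A1"
    using S.G_cohesive S.G_fair k(1) unfolding fair_def by blast+
  thus ?thesis by blast
qed



end
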